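(* Let $p$ be a prime and let $G$ be a finite $p$-group. Then the number of maximal abelian subgroups of $G$ is congruent to $1$ modulo $p$.
   Context: A subgroup $A$ of a group $G$ is called maximal abelian if $A$ is abelian and is not properly contained in any abelian subgroup of $G$, i.e. $A$ is maximal with respect to inclusion among the abelian subgroups of $G$. (Such subgroups need not be maximal subgroups of $G$ and may have different orders.) *)

theory Defs
  imports "HOL-Algebra.Algebra"
begin

definition abelian_subgroup :: "'a set \<Rightarrow> ('a, 'b) monoid_scheme \<Rightarrow> bool" where
  "abelian_subgroup A G \<longleftrightarrow> subgroup A G \<and>
     (\<forall>x\<in>A. \<forall>y\<in>A. x \<otimes>\<^bsub>G\<^esub> y = y \<otimes>\<^bsub>G\<^esub> x)"

definition maximal_abelian_subgroup :: "'a set \<Rightarrow> ('a, 'b) monoid_scheme \<Rightarrow> bool" where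
  "maximal_abelian_subgroup A G \<longleftrightarrow> abelian_subgroup A G \<and>
     (\<forall>B. abelian_subgroup B G \<and> A \<subseteq> B \<longrightarrow> B = A)"

end

theory Submission
  imports Defs
begin

definition cent :: "('a, 'b) monoid_scheme \<Rightarrow> 'a \<Rightarrow> 'a set" where
  "cent G x = {g \<in> carrier G. g \<otimes>\<^bsub>G\<^esub> x = x \<otimes>\<^bsub>G\<^esub> g}"

definition zcen :: "('a, 'b) monoid_scheme \<Rightarrow> 'a set" where
  "zcen G = {z \<in> carrier G. \<forall>g\<in>carrier G. z \<otimes>\<^bsub>G\<^esub> g = g \<otimes>\<^bsub>G\<^esub> z}"

lemma (in group) inv_comm_aux:
  assumes "g \<in> carrier G" "h \<in> carrier G" "g \<otimes> h = h \<otimes> g"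
  shows "g \<otimes> inv h = inv h \<otimes> g"
proof -
  have "inv h \<otimes> g = inv h \<otimes> (g \<otimes> h) \<otimes> inv h" using assms(1,2) by (simp add: m_assoc)
  also have "\<dots> = inv h \<otimes> (h \<otimes> g) \<otimes> inv h" using assms by simp
  also have "\<dots> = g \<otimes> inv h" using assms by (simp add: m_assoc[symmetric])
  finally show ?thesis by simp
qed

lemma (in group) comm_generate_aux:
  assumes g: "g \<in> carrier G" and S: "S \<subseteq> carrier G" and c: "\<forall>s\<in>S. g \<otimes> s = s \<otimes> g"
    and h: "h \<in> generate G S"
  shows "g \<otimes> h = h \<otimes> g"
  using h
proof induction
  case one thus ?case using g by simp
next
  case (incl h) thus ?case using c by blast
next
  case (inv h)
  then have hc: "h \<in> carrier G" and e: "g \<otimes> h = h \<otimes> g" using S c by auto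
  show ?case using inv_comm_aux[OF g hc e] .
next
  case (eng h1 h2)
  have c1: "h1 \<in> carrier G" "h2 \<in> carrier G" using eng.hyps generate_in_carrier S by auto
  have "g \<otimes> (h1 \<otimes> h2) = (g \<otimes> h1) \<otimes> h2" using c1 g by (simp add: m_assoc)
  also have "\<dots> = h1 \<otimes> (g \<otimes> h2)" using eng.IH c1 g by (simp add: m_assoc)
  also have "\<dots> = (h1 \<otimes> h2) \<otimes> g" using eng.IH c1 g by (simp add: m_assoc)
  finally show ?case .
qed

lemma (in group) comm_generate:
  assumes S: "S \<subseteq> carrier G" and c: "\<forall>s\<in>S. \<forall>t\<in>S. s \<otimes> t = t \<otimes> s"
    and a: "a \<in> generate G S" and b: "b \<in> generate G S"
  shows "a \<otimes> b = b \<otimes> a"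
proof -
  have "\<forall>s\<in>S. s \<otimes> b = b \<otimes> s"
    using comm_generate_aux[OF _ S _ b] S c by blast
  hence "b \<otimes> a = a \<otimes> b"
    using comm_generate_aux[OF _ S _ a] generate_in_carrier[OF S b] by simp
  thus ?thesis by simp
qed

lemma (in group) maxab_cent:
  assumes m: "maximal_abelian_subgroup A G" and y: "y \<in> carrier G"
    and c: "\<forall>a\<in>A. y \<otimes> a = a \<otimes> y"
  shows "y \<in> A"
proof -
  have sA: "subgroup A G" and cA: "\<forall>a\<in>A. \<forall>b\<in>A. a \<otimes> b = b \<otimes> a"
    and mx: "\<And>B. abelian_subgroup B G \<Longrightarrow> A \<subseteq> B \<Longrightarrow> B = A"
    using m unfolding maximal_abelian_subgroup_def abelian_subgroup_def by auto
  let ?S = "insert y A"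
  have S: "?S \<subseteq> carrier G" using subgroup.subset[OF sA] y by auto
  have cS: "\<forall>s\<in>?S. \<forall>t\<in>?S. s \<otimes> t = t \<otimes> s" using cA c by auto
  have "abelian_subgroup (generate G ?S) G"
    unfolding abelian_subgroup_def
    using generate_is_subgroup[OF S] comm_generate[OF S cS] by blast
  moreover have "A \<subseteq> generate G ?S" using generate.incl[of _ ?S G] by blast
  ultimately have "generate G ?S = A" using mx by blast
  thus ?thesis using generate.incl[of y ?S G] by blast
qed

lemma (in group) subgroup_sub_iff:
  assumes H: "subgroup H G"
  shows "subgroup A (G\<lparr>carrier := H\<rparr>) \<longleftrightarrow> subgroup A G \<and> A \<subseteq> H"
proof
  assume a: "subgroup A (G\<lparr>carrier := H\<rparr>)"
  have AH: "A \<subseteq> H" using subgroup.subset[OF a] by simp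
  have "subgroup A G"
  proof (rule subgroupI)
    show "A \<subseteq> carrier G" using AH subgroup.subset[OF H] by blast
    show "A \<noteq> {}" using subgroup.one_closed[OF a] by blast
    show "inv x \<in> A" if "x \<in> A" for x
      using subgroup.m_inv_closed[OF a that] m_inv_consistent[OF H] AH that by auto
    show "x \<otimes> y \<in> A" if "x \<in> A" "y \<in> A" for x y
      using subgroup.m_closed[OF a that] by simp
  qed
  thus "subgroup A G \<and> A \<subseteq> H" using AH by blast
next
  assume "subgroup A G \<and> A \<subseteq> H"
  thus "subgroup A (G\<lparr>carrier := H\<rparr>)" using subgroup_incl H by blast
qed

lemma (in group) ab_sub_iff:
  assumes H: "subgroup H G"
  shows "abelian_subgroup A (G\<lparr>carrier := H\<rparr>) \<longleftrightarrow> abelian_subgroup A G \<and> A \<subseteq> H"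
  using subgroup_sub_iff[OF H] unfolding abelian_subgroup_def by auto

lemma (in group) cent_subgroup:
  assumes x: "x \<in> carrier G" shows "subgroup (cent G x) G"
proof (rule subgroupI)
  show "cent G x \<subseteq> carrier G" unfolding cent_def by auto
  show "cent G x \<noteq> {}" using x unfolding cent_def by (auto intro!: exI[of _ \<one>])
  show "inv g \<in> cent G x" if "g \<in> cent G x" for g
  proof -
    have g: "g \<in> carrier G" "g \<otimes> x = x \<otimes> g" using that unfolding cent_def by auto
    have "x \<otimes> inv g = inv g \<otimes> x" using inv_comm_aux[OF x g(1)] g by simp
    thus ?thesis using g unfolding cent_def by auto
  qed
  show "g \<otimes> h \<in> cent G x" if "g \<in> cent G x" "h \<in> cent G x" for g h
  proof -
    have g: "g \<in> carrier G" "g \<otimes> x = x \<otimes> g" "h \<in> carrier G" "h \<otimes> x = x \<otimes> h"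
      using that unfolding cent_def by auto
    have "g \<otimes> h \<otimes> x = g \<otimes> (h \<otimes> x)" using g x by (simp add: m_assoc)
    also have "\<dots> = x \<otimes> (g \<otimes> h)" using g x by (simp add: m_assoc[symmetric])
    finally show ?thesis using g unfolding cent_def by auto
  qed
qed

lemma (in group) maxab_cent_iff:
  assumes x: "x \<in> carrier G"
  shows "{A. maximal_abelian_subgroup A G \<and> x \<in> A} =
         {A. maximal_abelian_subgroup A (G\<lparr>carrier := cent G x\<rparr>)}"
proof -
  have C: "subgroup (cent G x) G" by (rule cent_subgroup[OF x])
  have 1: "maximal_abelian_subgroup A (G\<lparr>carrier := cent G x\<rparr>)"
    if a: "maximal_abelian_subgroup A G \<and> x \<in> A" for A
  proof -
    have ab: "abelian_subgroup A G" and mx: "\<And>B. abelian_subgroup B G \<Longrightarrow> A \<subseteq> B \<Longrightarrow> B = A"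
      using a unfolding maximal_abelian_subgroup_def by auto
    have AC: "A \<subseteq> cent G x"
      using ab a unfolding abelian_subgroup_def cent_def using subgroup.subset by blast
    show "maximal_abelian_subgroup A (G\<lparr>carrier := cent G x\<rparr>)"
      unfolding maximal_abelian_subgroup_def using ab_sub_iff[OF C] ab AC mx by blast
  qed
  have 2: "maximal_abelian_subgroup A G \<and> x \<in> A"
    if a: "maximal_abelian_subgroup A (G\<lparr>carrier := cent G x\<rparr>)" for A
  proof -
    have ab: "abelian_subgroup A G" and AC: "A \<subseteq> cent G x"
      and mx: "\<And>B. abelian_subgroup B G \<Longrightarrow> B \<subseteq> cent G x \<Longrightarrow> A \<subseteq> B \<Longrightarrow> B = A"
      using a ab_sub_iff[OF C] unfolding maximal_abelian_subgroup_def by auto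
    interpret H: group "G\<lparr>carrier := cent G x\<rparr>" using subgroup_imp_group[OF C] .
    have xA: "x \<in> A"
    proof (rule H.maxab_cent[OF a])
      show "x \<in> carrier (G\<lparr>carrier := cent G x\<rparr>)" using x unfolding cent_def by simp
      show "\<forall>a\<in>A. x \<otimes>\<^bsub>G\<lparr>carrier := cent G x\<rparr>\<^esub> a = a \<otimes>\<^bsub>G\<lparr>carrier := cent G x\<rparr>\<^esub> x"
        using AC unfolding cent_def by auto
    qed
    have "B = A" if "abelian_subgroup B G" "A \<subseteq> B" for B
    proof -
      have "B \<subseteq> cent G x" using that xA unfolding abelian_subgroup_def cent_def
        using subgroup.subset by blast
      thus ?thesis using mx that by blast
    qed
    thus "maximal_abelian_subgroup A G \<and> x \<in> A"
      using ab xA unfolding maximal_abelian_subgroup_def by blast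
  qed
  show ?thesis using 1 2 by blast
qed

lemma (in group) pgroup_sub_card:
  assumes fin: "finite (carrier G)" and p: "Factorial_Ring.prime p" and ord: "order G = p ^ n"
    and H: "subgroup H G" and K: "subgroup K G" and HK: "H \<subset> K"
  shows "p * card H dvd card K"
proof -
  have "card H dvd card (rcosets H) * card H" by (rule dvd_triv_right)
  hence "card H dvd order G" unfolding lagrange[OF H] .
  then obtain i where i: "card H = p ^ i" using divides_primepow_nat[OF p] ord by auto
  have "card K dvd card (rcosets K) * card K" by (rule dvd_triv_right)
  hence "card K dvd order G" unfolding lagrange[OF K] .
  then obtain j where j: "card K = p ^ j" using divides_primepow_nat[OF p] ord by auto
  have "finite K" using subgroup.subset[OF K] fin finite_subset by blast
  hence "card H < card K" using psubset_card_mono HK by blast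
  hence "p ^ i < p ^ j" using i j by simp
  hence "i < j" by (rule power_less_imp_less_exp[OF prime_gt_1_nat[OF p]])
  hence "p ^ Suc i dvd p ^ j" by (intro le_imp_power_dvd) simp
  thus ?thesis using i j by simp
qed

lemma card_filter_sum:
  assumes "finite S"
  shows "card {x \<in> S. P x} = (\<Sum>x\<in>S. if P x then 1 else 0)"
  using assms by (simp add: sum.inter_filter[symmetric])

lemma (in group) zcen_subgroup: "subgroup (zcen G) G"
proof (rule subgroupI)
  show "zcen G \<subseteq> carrier G" unfolding zcen_def by auto
  show "zcen G \<noteq> {}" unfolding zcen_def by (auto intro!: exI[of _ \<one>])
  show "inv g \<in> zcen G" if "g \<in> zcen G" for g
  proof -
    have g: "g \<in> carrier G" "\<forall>x\<in>carrier G. g \<otimes> x = x \<otimes> g"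
      using that unfolding zcen_def by blast+
    have "\<forall>x\<in>carrier G. inv g \<otimes> x = x \<otimes> inv g"
    proof
      fix x assume x: "x \<in> carrier G"
      have "g \<otimes> x = x \<otimes> g" using g(2) x by blast
      hence "x \<otimes> g = g \<otimes> x" by (rule sym)
      thus "inv g \<otimes> x = x \<otimes> inv g" by (rule sym[OF inv_comm_aux[OF x g(1)]])
    qed
    thus ?thesis using inv_closed[OF g(1)] unfolding zcen_def by blast
  qed
  show "g \<otimes> h \<in> zcen G" if "g \<in> zcen G" "h \<in> zcen G" for g h
  proof -
    have g: "g \<in> carrier G" "h \<in> carrier G" "\<forall>x\<in>carrier G. g \<otimes> x = x \<otimes> g"
      "\<forall>x\<in>carrier G. h \<otimes> x = x \<otimes> h"
      using that unfolding zcen_def by blast+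
    have "g \<otimes> h \<otimes> x = x \<otimes> (g \<otimes> h)" if x: "x \<in> carrier G" for x
    proof -
      have hx: "h \<otimes> x = x \<otimes> h" using g(4) x by blast
      have gx: "g \<otimes> x = x \<otimes> g" using g(3) x by blast
      have "g \<otimes> h \<otimes> x = g \<otimes> (h \<otimes> x)" using g(1,2) x by (simp only: m_assoc)
      also have "\<dots> = g \<otimes> (x \<otimes> h)" by (simp only: hx)
      also have "\<dots> = (g \<otimes> x) \<otimes> h" using g(1,2) x by (simp only: m_assoc)
      also have "\<dots> = (x \<otimes> g) \<otimes> h" by (simp only: gx)
      also have "\<dots> = x \<otimes> (g \<otimes> h)" using g(1,2) x by (simp only: m_assoc)
      finally show ?thesis .
    qed
    thus ?thesis using m_closed[OF g(1,2)] unfolding zcen_def by blast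
  qed
qed

lemma (in group) step:
  assumes fin: "finite (carrier G)" and p: "Factorial_Ring.prime p" and ord: "order G = p ^ n"
    and IH: "\<And>m (H::('a,'b) monoid_scheme). m < n \<Longrightarrow> group H \<Longrightarrow> finite (carrier H)
       \<Longrightarrow> order H = p ^ m \<Longrightarrow> card {A. maximal_abelian_subgroup A H} mod p = 1"
  shows "card {A. maximal_abelian_subgroup A G} mod p = 1"
proof (cases "zcen G = carrier G")
  case True
  have s1: "A = carrier G" if m: "maximal_abelian_subgroup A G" for A
  proof -
    have Ac: "A \<subseteq> carrier G" using m subgroup.subset
      unfolding maximal_abelian_subgroup_def abelian_subgroup_def by blast
    have "y \<in> A" if y: "y \<in> carrier G" for y
    proof (rule maxab_cent[OF m y])
      have "y \<in> zcen G" using True y by simp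
      hence yc: "\<forall>g\<in>carrier G. y \<otimes> g = g \<otimes> y" unfolding zcen_def by blast
      show "\<forall>a\<in>A. y \<otimes> a = a \<otimes> y" using yc Ac by blast
    qed
    moreover note Ac
    ultimately show ?thesis by blast
  qed
  have s2: "maximal_abelian_subgroup (carrier G) G"
  proof -
    have "\<forall>x\<in>carrier G. \<forall>y\<in>carrier G. x \<otimes> y = y \<otimes> x"
    proof (intro ballI)
      fix x y assume x: "x \<in> carrier G" and y: "y \<in> carrier G"
      have "x \<in> zcen G" using True x by simp
      thus "x \<otimes> y = y \<otimes> x" using y unfolding zcen_def by blast
    qed
    hence "abelian_subgroup (carrier G) G"
      unfolding abelian_subgroup_def using subgroup_self by blast
    moreover have "B = carrier G" if "abelian_subgroup B G" "carrier G \<subseteq> B" for B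
      using that subgroup.subset unfolding abelian_subgroup_def by blast
    ultimately show ?thesis unfolding maximal_abelian_subgroup_def by blast
  qed
  have "{A. maximal_abelian_subgroup A G} = {carrier G}" using s1 s2 by blast
  thus ?thesis using prime_gt_1_nat[OF p] by simp
next
  case False
  define Z where "Z = zcen G"
  define M where "M = {A. maximal_abelian_subgroup A G}"
  define f where "f x = card {A. maximal_abelian_subgroup A G \<and> x \<in> A}" for x
  define z where "z = card Z"
  have Zs: "subgroup Z G" unfolding Z_def by (rule zcen_subgroup)
  have ZG: "Z \<subset> carrier G" using False subgroup.subset[OF Zs] unfolding Z_def by blast
  have finZ: "finite Z" using ZG fin finite_subset by blast
  have Mcar: "A \<subseteq> carrier G" and Msub: "subgroup A G" if "A \<in> M" for A
    using that subgroup.subset unfolding M_def maximal_abelian_subgroup_def abelian_subgroup_def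
    by blast+
  have finM: "finite M"
  proof -
    have "M \<subseteq> Pow (carrier G)" using Mcar by blast
    thus ?thesis using fin finite_subset by blast
  qed
  have finA: "finite A" if "A \<in> M" for A using Mcar[OF that] fin finite_subset by blast
  have ZA: "Z \<subseteq> A" if "A \<in> M" for A
  proof
    fix w assume w: "w \<in> Z"
    have m: "maximal_abelian_subgroup A G" using that unfolding M_def by simp
    show "w \<in> A"
      using maxab_cent[OF m] w Mcar[OF that] unfolding Z_def zcen_def by blast
  qed
  have ZneA: "Z \<noteq> A" if "A \<in> M" for A
  proof
    assume e: "Z = A"
    have m: "maximal_abelian_subgroup A G" using that unfolding M_def by simp
    have "y \<in> A" if y: "y \<in> carrier G" for y
    proof (rule maxab_cent[OF m y])
      show "\<forall>a\<in>A. y \<otimes> a = a \<otimes> y"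
      proof
        fix a assume "a \<in> A"
        hence "a \<in> zcen G" using e unfolding Z_def by simp
        hence "a \<otimes> y = y \<otimes> a" using y unfolding zcen_def by blast
        thus "y \<otimes> a = a \<otimes> y" by (rule sym)
      qed
    qed
    hence "carrier G \<subseteq> Z" using e by blast
    thus False using ZG by blast
  qed
  have dvdA: "p * z dvd card A" if "A \<in> M" for A
  proof -
    have "Z \<subset> A" using ZA[OF that] ZneA[OF that] by (rule psubsetI)
    thus ?thesis unfolding z_def by (rule pgroup_sub_card[OF fin p ord Zs Msub[OF that]])
  qed
  have dvdG: "p * z dvd order G"
    using pgroup_sub_card[OF fin p ord Zs subgroup_self ZG] unfolding z_def order_def .
  have fx: "f x mod p = 1" if x: "x \<in> carrier G - Z" for x
  proof -
    have C: "subgroup (cent G x) G" using cent_subgroup x by blast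
    have CG: "cent G x \<noteq> carrier G"
    proof
      assume e: "cent G x = carrier G"
      have "x \<otimes> g = g \<otimes> x" if g: "g \<in> carrier G" for g
      proof -
        have "g \<in> cent G x" using g e by simp
        thus ?thesis unfolding cent_def by simp
      qed
      hence "x \<in> Z" using x unfolding Z_def zcen_def by blast
      thus False using x by blast
    qed
    have "card (cent G x) dvd card (rcosets (cent G x)) * card (cent G x)" by (rule dvd_triv_right)
    hence "card (cent G x) dvd order G" unfolding lagrange[OF C] .
    then obtain m where m: "card (cent G x) = p ^ m" "m \<le> n"
      using divides_primepow_nat[OF p] ord by auto
    have "card (cent G x) < card (carrier G)"
      using CG subgroup.subset[OF C] fin by (simp add: psubset_card_mono psubsetI)
    hence "p ^ m < p ^ n" using m ord unfolding order_def by simp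
    hence "m < n" using prime_gt_1_nat[OF p] power_less_imp_less_exp by blast
    moreover have "group (G\<lparr>carrier := cent G x\<rparr>)" using subgroup_imp_group[OF C] .
    moreover have "finite (carrier (G\<lparr>carrier := cent G x\<rparr>))"
      using subgroup.subset[OF C] fin finite_subset by auto
    moreover have "order (G\<lparr>carrier := cent G x\<rparr>) = p ^ m" using m unfolding order_def by simp
    ultimately have "card {A. maximal_abelian_subgroup A (G\<lparr>carrier := cent G x\<rparr>)} mod p = 1"
      using IH by blast
    thus ?thesis unfolding f_def using maxab_cent_iff x by simp
  qed
  have finv: "f (w \<otimes> x) = f x" if w: "w \<in> Z" and x: "x \<in> carrier G" for w x
  proof -
    have "(w \<otimes> x \<in> A) = (x \<in> A)" if A: "A \<in> M" for A
    proof
      have wA: "w \<in> A" using ZA[OF A] w by blast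
      have wc: "w \<in> carrier G" using w ZG by blast
      show "x \<in> A" if "w \<otimes> x \<in> A"
      proof -
        have "inv w \<otimes> (w \<otimes> x) \<in> A" using subgroup.m_closed[OF Msub[OF A]]
            subgroup.m_inv_closed[OF Msub[OF A] wA] that by blast
        thus ?thesis using wc x by (simp add: m_assoc[symmetric])
      qed
      show "w \<otimes> x \<in> A" if "x \<in> A"
        using subgroup.m_closed[OF Msub[OF A] wA that] .
    qed
    hence "{A. maximal_abelian_subgroup A G \<and> w \<otimes> x \<in> A} = {A. maximal_abelian_subgroup A G \<and> x \<in> A}"
      unfolding M_def by blast
    thus ?thesis unfolding f_def by simp
  qed
  have dc: "(\<Sum>A\<in>M. card A - z) = (\<Sum>x\<in>carrier G - Z. f x)"
  proof -
    have "(\<Sum>A\<in>M. card A - z) = (\<Sum>A\<in>M. \<Sum>x\<in>carrier G - Z. if x \<in> A then 1 else 0)"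
    proof (rule sum.cong[OF refl])
      fix A assume A: "A \<in> M"
      have "card A - z = card (A - Z)" unfolding z_def using ZA[OF A] finZ
        by (simp add: card_Diff_subset)
      also have "A - Z = {x \<in> carrier G - Z. x \<in> A}" using Mcar[OF A] by blast
      also have "card \<dots> = (\<Sum>x\<in>carrier G - Z. if x \<in> A then 1 else 0)"
        by (rule card_filter_sum) (use fin in blast)
      finally show "card A - z = (\<Sum>x\<in>carrier G - Z. if x \<in> A then 1 else 0)" .
    qed
    also have "\<dots> = (\<Sum>x\<in>carrier G - Z. \<Sum>A\<in>M. if x \<in> A then 1 else 0)"
      by (rule sum.swap)
    also have "\<dots> = (\<Sum>x\<in>carrier G - Z. f x)"
    proof (rule sum.cong[OF refl])
      fix x
      have "f x = card {A \<in> M. x \<in> A}" unfolding f_def M_def by simp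
      also have "\<dots> = (\<Sum>A\<in>M. if x \<in> A then 1 else 0)" by (rule card_filter_sum[OF finM])
      finally show "(\<Sum>A\<in>M. if x \<in> A then 1 else 0) = f x" by simp
    qed
    finally show ?thesis .
  qed
  have cos: "p * z dvd (\<Sum>x\<in>carrier G - Z. f x - 1)"
  proof -
    define C where "C = rcosets Z - {Z}"
    have Zc: "Z \<subseteq> carrier G" using subgroup.subset[OF Zs] .
    have "Z #> \<one> \<in> rcosets Z" unfolding RCOSETS_def using one_closed by blast
    hence ZR: "Z \<in> rcosets Z" using coset_mult_one[OF Zc] by simp
    have pw: "pairwise disjnt (rcosets Z)" by (rule rcos_disjoint[OF Zs])
    have pd0: "c1 \<inter> c2 = {}" if "c1 \<in> rcosets Z" "c2 \<in> rcosets Z" "c1 \<noteq> c2" for c1 c2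
      using pw that unfolding pairwise_def disjnt_def by blast
    have disj: "c \<inter> Z = {}" if c: "c \<in> C" for c
      using pd0[of c Z] c ZR unfolding C_def by blast
    have part: "\<Union>(rcosets Z) = carrier G" by (rule rcosets_part_G[OF Zs])
    have UC: "\<Union>C = carrier G - Z"
    proof
      show "\<Union>C \<subseteq> carrier G - Z"
      proof
        fix x assume "x \<in> \<Union>C"
        then obtain c where c: "c \<in> C" "x \<in> c" by blast
        have "c \<subseteq> carrier G" using c part unfolding C_def by blast
        thus "x \<in> carrier G - Z" using c disj[OF c(1)] by blast
      qed
      show "carrier G - Z \<subseteq> \<Union>C"
      proof
        fix x assume x: "x \<in> carrier G - Z"
        then obtain c where c: "c \<in> rcosets Z" "x \<in> c" using part by blast
        have "c \<noteq> Z" using c x by blast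
        thus "x \<in> \<Union>C" using c unfolding C_def by blast
      qed
    qed
    have finc: "\<forall>c\<in>C. finite c"
    proof
      fix c assume "c \<in> C"
      hence "c \<subseteq> carrier G" using UC by blast
      thus "finite c" using fin finite_subset by blast
    qed
    have pd: "\<forall>c1\<in>C. \<forall>c2\<in>C. c1 \<noteq> c2 \<longrightarrow> c1 \<inter> c2 = {}"
      using pd0 unfolding C_def by blast
    have "(\<Sum>x\<in>\<Union>C. f x - 1) = (sum \<circ> sum) (\<lambda>x. f x - 1) C"
      by (rule sum.Union_disjoint[OF finc pd])
    hence eqs: "(\<Sum>x\<in>carrier G - Z. f x - 1) = (\<Sum>c\<in>C. \<Sum>x\<in>c. f x - 1)"
      unfolding UC by (simp only: comp_apply)
    have dvc: "p * z dvd (\<Sum>x\<in>c. f x - 1)" if c: "c \<in> C" for c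
    proof -
      have cR: "c \<in> rcosets Z" using c unfolding C_def by blast
      obtain g where g: "g \<in> carrier G" and cg: "c = Z #> g"
        using cR unfolding RCOSETS_def by blast
      have gc: "g \<in> c" using rcos_self[OF g Zs] cg by simp
      hence "g \<in> carrier G - Z" using g disj[OF c] by blast
      hence fg: "f g mod p = 1" by (rule fx)
      have "(\<Sum>x\<in>c. f x - 1) = (\<Sum>x\<in>c. f g - 1)"
      proof (rule sum.cong[OF refl])
        fix x assume "x \<in> c"
        then obtain w where w: "w \<in> Z" "x = w \<otimes> g" using cg unfolding r_coset_def by blast
        have "f x = f g" using finv[OF w(1) g] w(2) by simp
        thus "f x - 1 = f g - 1" by simp
      qed
      also have "\<dots> = card c * (f g - 1)" by simp
      also have "card c = z" unfolding z_def
        using card_rcosets_equal[OF cR Zc] by simp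
      finally have e: "(\<Sum>x\<in>c. f x - 1) = z * (f g - 1)" .
      have "f g - 1 = p * (f g div p)" using fg
      proof -
        have "f g = p * (f g div p) + f g mod p" by simp
        thus ?thesis using fg by simp
      qed
      thus ?thesis using e by simp
    qed
    show ?thesis unfolding eqs by (rule dvd_sum) (rule dvc)
  qed
  have fpos: "f x \<ge> 1" if "x \<in> carrier G - Z" for x
    using fx[OF that] by (cases "f x") auto
  have zle: "z \<le> card A" if "A \<in> M" for A
    unfolding z_def using card_mono[OF finA[OF that] ZA[OF that]] .
  have zpos: "z > 0" unfolding z_def using finZ subgroup.one_closed[OF Zs] by (simp add: card_gt_0_iff; blast)
  have cardS: "card (carrier G - Z) = order G - z"
    unfolding z_def order_def using ZG finZ by (simp add: card_Diff_subset)
  have zleG: "z \<le> order G"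
    unfolding z_def order_def using ZG fin card_mono by blast
  define m where "m = card M"
  define SA where "SA = (\<Sum>A\<in>M. card A)"
  define D where "D = (\<Sum>x\<in>carrier G - Z. f x - 1)"
  have e1: "int (\<Sum>A\<in>M. card A - z) = int SA - int m * int z"
  proof -
    have "int (\<Sum>A\<in>M. card A - z) = (\<Sum>A\<in>M. int (card A - z))" by (rule of_nat_sum)
    also have "\<dots> = (\<Sum>A\<in>M. int (card A) - int z)"
    proof (rule sum.cong[OF refl])
      fix A assume "A \<in> M"
      thus "int (card A - z) = int (card A) - int z" using zle by (simp add: of_nat_diff)
    qed
    also have "\<dots> = (\<Sum>A\<in>M. int (card A)) - (\<Sum>A\<in>M. int z)" by (rule sum_subtractf)
    also have "(\<Sum>A\<in>M. int (card A)) = int SA" unfolding SA_def by (rule of_nat_sum[symmetric])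
    also have "(\<Sum>A\<in>M. int z) = int m * int z" unfolding m_def by simp
    finally show ?thesis .
  qed
  have e2: "int (\<Sum>x\<in>carrier G - Z. f x) = int D + int (order G) - int z"
  proof -
    have "int (\<Sum>x\<in>carrier G - Z. f x) = (\<Sum>x\<in>carrier G - Z. int (f x))" by (rule of_nat_sum)
    also have "\<dots> = (\<Sum>x\<in>carrier G - Z. int (f x - 1) + 1)"
    proof (rule sum.cong[OF refl])
      fix x assume "x \<in> carrier G - Z"
      thus "int (f x) = int (f x - 1) + 1" using fpos by (simp add: of_nat_diff)
    qed
    also have "\<dots> = (\<Sum>x\<in>carrier G - Z. int (f x - 1)) + (\<Sum>x\<in>carrier G - Z. 1)"
      by (rule sum.distrib)
    also have "(\<Sum>x\<in>carrier G - Z. int (f x - 1)) = int D" unfolding D_def by (rule of_nat_sum[symmetric])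
    also have "(\<Sum>x\<in>carrier G - Z. (1::int)) = int (card (carrier G - Z))" by simp
    finally show ?thesis using cardS zleG by simp
  qed
  have "int SA - int m * int z = int D + int (order G) - int z" using dc e1 e2 by simp
  hence e3: "(int m - 1) * int z = int SA - int D - int (order G)" by (simp add: algebra_simps)
  have "p * z dvd SA" unfolding SA_def by (rule dvd_sum) (rule dvdA)
  hence d1: "int p * int z dvd int SA" by (simp flip: of_nat_mult add: int_dvd_int_iff)
  have "p * z dvd D" unfolding D_def by (rule cos)
  hence d2: "int p * int z dvd int D" by (simp flip: of_nat_mult add: int_dvd_int_iff)
  have d3: "int p * int z dvd int (order G)" using dvdG
    by (simp flip: of_nat_mult add: int_dvd_int_iff)
  have "int p * int z dvd (int m - 1) * int z" using e3 d1 d2 d3 by simp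
  hence "int p dvd int m - 1" using zpos by simp
  hence "int m mod int p = 1 mod int p" by (simp add: mod_eq_dvd_iff)
  hence "int m mod int p = 1" using prime_gt_1_nat[OF p] by simp
  hence "int (m mod p) = 1" by (simp add: zmod_int)
  hence "m mod p = 1" by simp
  thus ?thesis unfolding m_def M_def .
qed

lemma main_ind:
  fixes p :: nat assumes p: "Factorial_Ring.prime p"
  shows "\<forall>G::('a,'b) monoid_scheme. group G \<longrightarrow> finite (carrier G) \<longrightarrow> order G = p ^ n
     \<longrightarrow> card {A. maximal_abelian_subgroup A G} mod p = 1"
proof (induction n rule: less_induct)
  case (less n)
  show ?case
  proof (intro allI impI)
    fix G :: "('a,'b) monoid_scheme"
    assume gG: "group G" and fin: "finite (carrier G)" and ord: "order G = p ^ n"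
    show "card {A. maximal_abelian_subgroup A G} mod p = 1"
    proof (rule group.step[OF gG fin p ord])
      fix m and H :: "('a,'b) monoid_scheme"
      assume "m < n" "group H" "finite (carrier H)" "order H = p ^ m"
      thus "card {A. maximal_abelian_subgroup A H} mod p = 1" using less.IH[of m] by blast
    qed
  qed
qed

theorem mainTheorem1:
  fixes G (structure) and p :: nat and n :: nat
  assumes "group G" and "finite (carrier G)" and "Factorial_Ring.prime p"
    and "order G = p ^ n"
  shows "card {A. maximal_abelian_subgroup A G} mod p = 1"
  using main_ind[OF assms(3)] assms by blast

end
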